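(* Let $L$ be a fixed graph and let $n$ be sufficiently large. For every proper edge-colouring $\psi$ of $K_{L,n}$ there is a set $C_\psi\subseteq V(\tilde R)$ with $|C_\psi|=\Omega_L(n)$ which is compatible with $\tilde L$ with respect to $\psi$.
   Context: For vertex-disjoint graphs $L,R$, the join $K_{L,R}$ has vertex set $V(L)\cup V(R)$ and edge set $E(L)\cup E(R)\cup\{uv: u\in V(L), v\in V(R)\}$; $K_{L,n}$ denotes $K_{L,R}$ where $R$ is an edgeless graph on $n$ vertices; $\tilde L,\tilde R$ denote the copies of $L,R$ inside the join. Given a graph $G$, a proper edge-colouring $\psi$ of $G$ and a subgraph $K\subseteq G$, a vertex $x$ in the common neighbourhood of $V(K)$ is of interest to $K$ with respect to $\psi$ if $\psi(E(K))\cap\{\psi(xk):k\in V(K)\}=\emptyset$. A set $X$ of vertices is compatible with $K$ with respect to $\psi$ if every $x\in X$ is of interest to $K$ and the sets $\{\psi(xk):k\in V(K)\}$, $x\in X$, are pairwise disjoint. The implicit constant in $\Omega_L(n)$ depends only on $L$. *)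

theory Defs
  imports Complex_Main
begin

definition simple_graph :: "'v set \<Rightarrow> 'v set set \<Rightarrow> bool" where
  "simple_graph V E \<longleftrightarrow> finite V \<and>
     (\<forall>e\<in>E. \<exists>u v. u \<noteq> v \<and> u \<in> V \<and> v \<in> V \<and> e = {u, v})"

text \<open>The join K_{L,n}: L is copied on the left (Inl), R is the edgeless graph on
  the n vertices Inr 0, ..., Inr (n-1).\<close>
definition join_verts :: "'a set \<Rightarrow> nat \<Rightarrow> ('a + nat) set" where
  "join_verts V n = Inl ` V \<union> Inr ` {..<n}"

definition join_edges :: "'a set \<Rightarrow> 'a set set \<Rightarrow> nat \<Rightarrow> ('a + nat) set set" where
  "join_edges V E n = (\<lambda>e. Inl ` e) ` E \<union> {{Inl u, Inr i} | u i. u \<in> V \<and> i < n}"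

definition proper_edge_colouring :: "'v set set \<Rightarrow> ('v set \<Rightarrow> 'c) \<Rightarrow> bool" where
  "proper_edge_colouring E \<psi> \<longleftrightarrow>
     (\<forall>e\<in>E. \<forall>f\<in>E. e \<noteq> f \<and> e \<inter> f \<noteq> {} \<longrightarrow> \<psi> e \<noteq> \<psi> f)"

definition common_nbhd :: "'v set \<Rightarrow> 'v set set \<Rightarrow> 'v set \<Rightarrow> 'v set" where
  "common_nbhd VG EG W = {x \<in> VG. \<forall>k\<in>W. {x, k} \<in> EG}"

definition of_interest ::
  "'v set \<Rightarrow> 'v set set \<Rightarrow> ('v set \<Rightarrow> 'c) \<Rightarrow> 'v set \<Rightarrow> 'v set set \<Rightarrow> 'v \<Rightarrow> bool" where
  "of_interest VG EG \<psi> KV KE x \<longleftrightarrow>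
     x \<in> common_nbhd VG EG KV \<and> \<psi> ` KE \<inter> {\<psi> {x, k} | k. k \<in> KV} = {}"

definition compatible ::
  "'v set \<Rightarrow> 'v set set \<Rightarrow> ('v set \<Rightarrow> 'c) \<Rightarrow> 'v set \<Rightarrow> 'v set set \<Rightarrow> 'v set \<Rightarrow> bool" where
  "compatible VG EG \<psi> KV KE X \<longleftrightarrow>
     (\<forall>x\<in>X. of_interest VG EG \<psi> KV KE x) \<and>
     (\<forall>x\<in>X. \<forall>y\<in>X. x \<noteq> y \<longrightarrow>
        {\<psi> {x, k} | k. k \<in> KV} \<inter> {\<psi> {y, k} | k. k \<in> KV} = {})"

end

theory Submission
  imports Defs
begin

lemma greedy_indep:
  fixes R :: "'b \<Rightarrow> 'b \<Rightarrow> bool"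
  assumes "finite A" "\<forall>x y. R x y \<longrightarrow> R y x"
    "\<forall>x\<in>A. card (insert x {y\<in>A. R x y}) \<le> D"
  shows "\<exists>B\<subseteq>A. (\<forall>x\<in>B. \<forall>y\<in>B. x \<noteq> y \<longrightarrow> \<not> R x y) \<and> card A \<le> D * card B"
  using assms
proof (induction "card A" arbitrary: A rule: less_induct)
  case less
  show ?case
  proof (cases "A = {}")
    case True then show ?thesis by auto
  next
    case False
    then obtain x where x: "x \<in> A" by auto
    define A' where "A' = A - insert x {y\<in>A. R x y}"
    have fA': "finite A'" using less.prems unfolding A'_def by auto
    have lt: "card A' < card A" unfolding A'_def using x less.prems(1)
      by (intro psubset_card_mono) auto
    have bd: "\<forall>z\<in>A'. card (insert z {y\<in>A'. R z y}) \<le> D"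
    proof
      fix z assume z: "z \<in> A'"
      have "card (insert z {y\<in>A'. R z y}) \<le> card (insert z {y\<in>A. R z y})"
        by (rule card_mono) (use less.prems(1) in \<open>auto simp: A'_def\<close>)
      also have "\<dots> \<le> D" using less.prems(3) z by (auto simp: A'_def)
      finally show "card (insert z {y\<in>A'. R z y}) \<le> D" .
    qed
    obtain B' where B': "B' \<subseteq> A'" "\<forall>x\<in>B'. \<forall>y\<in>B'. x \<noteq> y \<longrightarrow> \<not> R x y" "card A' \<le> D * card B'"
      using less.hyps[OF lt fA' less.prems(2) bd] by blast
    define B where "B = insert x B'"
    have xB': "x \<notin> B'" using B'(1) by (auto simp: A'_def)
    have fB': "finite B'" using B'(1) fA' finite_subset by blast
    have "card A \<le> card A' + card (insert x {y\<in>A. R x y})"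
    proof -
      have "A \<subseteq> A' \<union> insert x {y\<in>A. R x y}" by (auto simp: A'_def)
      hence "card A \<le> card (A' \<union> insert x {y\<in>A. R x y})"
        by (rule card_mono[rotated]) (use less.prems(1) fA' in auto)
      also have "\<dots> \<le> card A' + card (insert x {y\<in>A. R x y})" by (rule card_Un_le)
      finally show ?thesis .
    qed
    also have "\<dots> \<le> D * card B' + D" using B'(3) less.prems(3) x by (meson add_mono)
    also have "\<dots> = D * card B" unfolding B_def using xB' fB' by simp
    finally have c: "card A \<le> D * card B" .
    have "B \<subseteq> A" using B'(1) x by (auto simp: B_def A'_def)
    moreover have "\<forall>u\<in>B. \<forall>v\<in>B. u \<noteq> v \<longrightarrow> \<not> R u v"
      using B'(1,2) less.prems(2) unfolding B_def A'_def by blast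
    ultimately show ?thesis using c by blast
  qed
qed

theorem mainTheorem5:
  fixes V :: "'a set" and E :: "'a set set"
  assumes "simple_graph V E"
  shows "\<exists>c::real. c > 0 \<and> (\<exists>N::nat. \<forall>n\<ge>N. \<forall>\<psi> :: ('a + nat) set \<Rightarrow> nat.
           proper_edge_colouring (join_edges V E n) \<psi> \<longrightarrow>
           (\<exists>C. C \<subseteq> Inr ` {..<n} \<and> c * real n \<le> real (card C) \<and>
                compatible (join_verts V n) (join_edges V E n) \<psi> (Inl ` V) ((\<lambda>e. Inl ` e) ` E) C))"
proof -
  have fV: "finite V" using assms by (simp add: simple_graph_def)
  have EP: "E \<subseteq> Pow V" using assms unfolding simple_graph_def by auto
  have fE: "finite E" using EP fV by (meson finite_Pow_iff finite_subset)
  define l where "l = card V"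
  define m where "m = card E"
  define D where "D = l * l + 1"
  have Dpos: "D > 0" by (simp add: D_def)
  define c :: real where "c = 1 / (2 * real D)"
  have cpos: "c > 0" using Dpos by (simp add: c_def)
  have main: "\<exists>C. C \<subseteq> Inr ` {..<n} \<and> c * real n \<le> real (card C) \<and>
                compatible (join_verts V n) (join_edges V E n) \<psi> (Inl ` V) ((\<lambda>e. Inl ` e) ` E) C"
    if nN: "n \<ge> 2 * m * l" and pr: "proper_edge_colouring (join_edges V E n) \<psi>" for n and \<psi> :: "('a + nat) set \<Rightarrow> nat"
  proof -
    define col where "col j = (\<lambda>u. \<psi> {Inr j, Inl u}) ` V" for j
    define E' :: "('a + nat) set set" where "E' = (\<lambda>e. Inl ` e) ` E"
    have inE: "{Inr j, Inl u} \<in> join_edges V E n" if "u \<in> V" "j < n" for u j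
      proof -
      have "{Inl u, Inr j} \<in> {{Inl u, Inr i} | u i. u \<in> V \<and> i < n}" using that by blast
      thus ?thesis unfolding join_edges_def by (simp add: insert_commute)
    qed
    have colc: "card {j. j < n \<and> k \<in> col j} \<le> l" for k
    proof -
      define f where "f j = (SOME u. u \<in> V \<and> \<psi> {Inr j, Inl u} = k)" for j
      have fp: "f j \<in> V \<and> \<psi> {Inr j, Inl (f j)} = k" if "j < n \<and> k \<in> col j" for j
      proof -
        have "\<exists>u. u \<in> V \<and> \<psi> {Inr j, Inl u} = k" using that unfolding col_def by blast
        thus ?thesis unfolding f_def by (rule someI_ex)
      qed
      have "inj_on f {j. j < n \<and> k \<in> col j}"
      proof (rule inj_onI)
        fix a b assume a: "a \<in> {j. j < n \<and> k \<in> col j}" and b: "b \<in> {j. j < n \<and> k \<in> col j}" and e: "f a = f b"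
        show "a = b"
        proof (rule ccontr)
          assume ne: "a \<noteq> b"
          have "{Inr a, Inl (f a)} \<noteq> {Inr b, Inl (f b)}" using ne by (auto simp: doubleton_eq_iff)
          moreover have "{Inr a, Inl (f a)} \<inter> {Inr b, Inl (f b)} \<noteq> {}" using e by auto
          moreover have "{Inr a, Inl (f a)} \<in> join_edges V E n" "{Inr b, Inl (f b)} \<in> join_edges V E n"
            using fp a b inE by simp_all
          ultimately have "\<psi> {Inr a, Inl (f a)} \<noteq> \<psi> {Inr b, Inl (f b)}"
            using pr unfolding proper_edge_colouring_def by metis
          thus False using fp a b by simp
        qed
      qed
      moreover have "f ` {j. j < n \<and> k \<in> col j} \<subseteq> V" using fp by auto
      ultimately show ?thesis unfolding l_def using card_inj_on_le fV by metis
    qed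
    have cardcol: "card (col j) \<le> l" for j unfolding col_def l_def by (rule card_image_le[OF fV])
    have fcol: "finite (col j)" for j unfolding col_def using fV by simp
    have UNb: "card (\<Union>k\<in>K. {j. j < n \<and> k \<in> col j}) \<le> card K * l" if "finite K" for K
    proof -
      have "card (\<Union>k\<in>K. {j. j < n \<and> k \<in> col j}) \<le> (\<Sum>k\<in>K. card {j. j < n \<and> k \<in> col j})"
        by (rule card_UN_le[OF that])
      also have "\<dots> \<le> (\<Sum>k\<in>K. l)" by (rule sum_mono) (rule colc)
      finally show ?thesis by simp
    qed
    define Bad where "Bad = {j. j < n \<and> col j \<inter> \<psi> ` E' \<noteq> {}}"
    have "Bad = (\<Union>k\<in>\<psi> ` E'. {j. j < n \<and> k \<in> col j})" unfolding Bad_def by auto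
    moreover have "finite (\<psi> ` E')" using fE E'_def by simp
    ultimately have "card Bad \<le> card (\<psi> ` E') * l" using UNb by presburger
    also have "card (\<psi> ` E') \<le> m"
    proof -
      have "card (\<psi> ` E') \<le> card E'" using fE E'_def card_image_le by auto
      also have "\<dots> \<le> m" unfolding E'_def m_def using fE card_image_le by blast
      finally show ?thesis .
    qed
    hence "card (\<psi> ` E') * l \<le> m * l" by simp
    finally have cBad: "card Bad \<le> m * l" .
    define A where "A = {j. j < n} - Bad"
    have fA: "finite A" unfolding A_def by simp
    have "n \<le> card A + card Bad"
    proof -
      have "{j. j < n} \<subseteq> A \<union> Bad" unfolding A_def by auto
      hence "card {j. j < n} \<le> card (A \<union> Bad)" by (rule card_mono[rotated]) (auto simp: A_def Bad_def)
      also have "\<dots> \<le> card A + card Bad" by (rule card_Un_le)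
      finally show ?thesis by simp
    qed
    hence cA: "n \<le> card A + m * l" using cBad by simp
    define R where "R i j = (col i \<inter> col j \<noteq> {})" for i j
    have Rs: "\<forall>x y. R x y \<longrightarrow> R y x" unfolding R_def by blast
    have Rb: "\<forall>x\<in>A. card (insert x {y\<in>A. R x y}) \<le> D"
    proof
      fix x assume "x \<in> A"
      have "{y\<in>A. R x y} \<subseteq> (\<Union>k\<in>col x. {j. j < n \<and> k \<in> col j})"
        unfolding R_def A_def by auto
      hence "card {y\<in>A. R x y} \<le> card (\<Union>k\<in>col x. {j. j < n \<and> k \<in> col j})"
        by (rule card_mono[rotated]) (use fcol in auto)
      also have "\<dots> \<le> card (col x) * l" by (rule UNb[OF fcol])
      also have "\<dots> \<le> l * l" using cardcol[of x] by simp
      finally have "card {y\<in>A. R x y} \<le> l * l" .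
      moreover have "card (insert x {y\<in>A. R x y}) \<le> Suc (card {y\<in>A. R x y})"
        by (simp add: card_insert_le_m1)
      ultimately show "card (insert x {y\<in>A. R x y}) \<le> D" unfolding D_def by simp
    qed
    obtain B where B: "B \<subseteq> A" "\<forall>x\<in>B. \<forall>y\<in>B. x \<noteq> y \<longrightarrow> \<not> R x y" "card A \<le> D * card B"
      using greedy_indep[OF fA Rs Rb] by blast
    define C :: "('a + nat) set" where "C = Inr ` B"
    have cC: "card C = card B" unfolding C_def by (simp add: card_image)
    have CS: "C \<subseteq> Inr ` {..<n}" using B(1) unfolding C_def A_def by auto
    have "real n \<le> 2 * real (card A)" using cA nN by linarith
    also have "\<dots> \<le> 2 * real (D * card B)" using B(3) by linarith
    finally have "real n \<le> 2 * real D * real (card B)" by simp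
    hence size: "c * real n \<le> real (card C)" using Dpos cC
      by (simp add: c_def field_simps)
    have colset: "{\<psi> {Inr j, k} | k. k \<in> Inl ` V} = col j" for j
      unfolding col_def by auto
    have comp: "compatible (join_verts V n) (join_edges V E n) \<psi> (Inl ` V) E' C"
      unfolding compatible_def
    proof (intro conjI ballI impI)
      fix x assume "x \<in> C"
      then obtain j where j: "x = Inr j" "j \<in> B" unfolding C_def by auto
      have jn: "j < n" "j \<notin> Bad" using j B(1) unfolding A_def by auto
      show "of_interest (join_verts V n) (join_edges V E n) \<psi> (Inl ` V) E' x"
        unfolding of_interest_def common_nbhd_def
        using jn inE unfolding j(1) colset Bad_def join_verts_def by auto
    next
      fix x y assume "x \<in> C" "y \<in> C" "x \<noteq> y"
      then obtain i j where ij: "x = Inr i" "y = Inr j" "i \<in> B" "j \<in> B" "i \<noteq> j"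
        unfolding C_def by auto
      show "{\<psi> {x, k} | k. k \<in> Inl ` V} \<inter> {\<psi> {y, k} | k. k \<in> Inl ` V} = {}"
        using B(2) ij unfolding ij(1,2) colset R_def by blast
    qed
    show ?thesis using CS size comp E'_def by blast
  qed
  show ?thesis using cpos main by blast
qed

end
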